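(* Let $\mu$ be a probability measure on $\mathbb{R}$ with compact infinite support and orthonormal polynomials $p_n(x;d\mu)$. Let $H$ be the convex hull of $\operatorname{supp}(\mu)$, $D=\frac12\operatorname{diam}(H)$, and for $z\in\mathbb{C}\setminus H$ let $d=\operatorname{dist}(z,H)$. Then for every $n\ge1$, $$|p_n(z;d\mu)|^2\ge\Bigl(\frac dD\Bigr)^2\Bigl(1+\Bigl(\frac dD\Bigr)^2\Bigr)^{n-1}.$$ In particular $p_n(z)\ne0$ for all $n$ and $\liminf_{n\to\infty}|p_n(z;d\mu)|^{1/n}\ge\bigl(1+(d/D)^2\bigr)^{1/2}>1$.
   Context: The orthonormal polynomials $p_n$ are obtained by Gram–Schmidt from $1,x,x^2,\dots$ in $L^2(\mu)$, with positive leading coefficients; $p_0=1$ since $\mu$ is a probability measure. *)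

theory Defs
  imports "HOL-Probability.Probability" "HOL-Computational_Algebra.Polynomial"
begin

definition measure_support :: "real measure \<Rightarrow> real set" where
  "measure_support \<mu> = {x. \<forall>U. open U \<and> x \<in> U \<longrightarrow> emeasure \<mu> U > 0}"

definition orthonormal_polys :: "real measure \<Rightarrow> (nat \<Rightarrow> real poly) \<Rightarrow> bool" where
  "orthonormal_polys \<mu> p \<longleftrightarrow>
     (\<forall>n. degree (p n) = n \<and> lead_coeff (p n) > 0) \<and>
     (\<forall>m n. integrable \<mu> (\<lambda>x. poly (p m) x * poly (p n) x) \<and>
            (\<integral>x. poly (p m) x * poly (p n) x \<partial>\<mu>) = (if m = n then 1 else 0))"

end

theory Submission
  imports Defs "HOL-Real_Asymp.Real_Asymp"
begin



locale OP =
  fixes \<mu> :: "real measure" and p :: "nat \<Rightarrow> real poly"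
  assumes ps: "prob_space \<mu>" and sb: "sets \<mu> = sets borel"
    and op: "orthonormal_polys \<mu> p"
begin

lemma deg: "degree (p n) = n" and lc: "lead_coeff (p n) > 0"
  using op unfolding orthonormal_polys_def by blast+

lemma int_pp: "integrable \<mu> (\<lambda>x. poly (p m) x * poly (p n) x)"
  and orth: "(\<integral>x. poly (p m) x * poly (p n) x \<partial>\<mu>) = (if m = n then 1 else 0)"
  using op unfolding orthonormal_polys_def by auto

lemma space_UNIV: "space \<mu> = UNIV"
  using sets_eq_imp_space_eq[OF sb] by simp

lemma p0: "p 0 = [:1:]"
proof -
  define c where "c = coeff (p 0) 0"
  have pc: "p 0 = [:c:]" unfolding c_def using deg[of 0] by (metis degree_0_id)
  have "c > 0" using lc[of 0] deg[of 0] by (simp add: c_def)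
  have "(\<integral>x. poly (p 0) x * poly (p 0) x \<partial>\<mu>) = c * c"
    using prob_space.prob_space[OF ps] by (simp add: pc)
  hence "c * c = 1" using orth[of 0 0] by simp
  hence "(c - 1) * (c + 1) = 0" by (simp add: algebra_simps)
  with \<open>c > 0\<close> have "c = 1" by simp
  thus ?thesis using pc by simp
qed

lemma expand: "degree f \<le> n \<Longrightarrow> \<exists>c. f = (\<Sum>k\<le>n. smult (c k) (p k))"
proof (induction n arbitrary: f)
  case 0
  hence "f = [:coeff f 0:]" by (metis degree_0_id le_zero_eq)
  hence "f = (\<Sum>k\<le>0. smult ((\<lambda>_. coeff f 0) k) (p k))" by (simp add: p0)
  thus ?case by (rule exI[where x="\<lambda>_. coeff f 0"])
next
  case (Suc n)
  define c0 where "c0 = coeff f (Suc n) / lead_coeff (p (Suc n))"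
  define g where "g = f - smult c0 (p (Suc n))"
  have lz: "lead_coeff (p (Suc n)) \<noteq> 0" using lc[of "Suc n"] by (metis less_irrefl)
  have "degree g \<le> n"
  proof (rule degree_le, intro allI impI)
    fix i assume "n < i"
    show "coeff g i = 0"
    proof (cases "i = Suc n")
      case True thus ?thesis using lz deg[of "Suc n"] by (simp add: g_def c0_def)
    next
      case False
      hence "i > Suc n" using \<open>n < i\<close> by simp
      hence "coeff f i = 0" "coeff (p (Suc n)) i = 0" using Suc.prems deg[of "Suc n"]
        by (auto intro: coeff_eq_0)
      thus ?thesis by (simp add: g_def)
    qed
  qed
  then obtain c where c: "g = (\<Sum>k\<le>n. smult (c k) (p k))" using Suc.IH by blast
  define c' where "c' = c(Suc n := c0)"
  have "f = g + smult c0 (p (Suc n))" by (simp add: g_def)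
  also have "\<dots> = (\<Sum>k\<le>Suc n. smult (c' k) (p k))"
    by (simp add: c c'_def)
  finally show ?case by blast
qed

lemma poly_integ: "integrable \<mu> (\<lambda>x. poly f x)"
proof -
  obtain c where c: "f = (\<Sum>k\<le>degree f. smult (c k) (p k))" using expand by blast
  have "integrable \<mu> (\<lambda>x. \<Sum>k\<le>degree f. c k * (poly (p k) x * poly (p 0) x))"
    using int_pp by auto
  moreover have "(\<lambda>x. \<Sum>k\<le>degree f. c k * (poly (p k) x * poly (p 0) x)) = (\<lambda>x. poly f x)"
  proof
    fix x
    have "poly f x = (\<Sum>k\<le>degree f. c k * poly (p k) x)"
      using arg_cong[OF c, of "\<lambda>q. poly q x"] by (simp add: poly_sum)
    thus "(\<Sum>k\<le>degree f. c k * (poly (p k) x * poly (p 0) x)) = poly f x" by (simp add: p0)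
  qed
  ultimately show ?thesis by simp
qed

lemma coeff_int:
  assumes "f = (\<Sum>k\<le>n. smult (c k) (p k))" "m \<le> n"
  shows "(\<integral>x. poly f x * poly (p m) x \<partial>\<mu>) = c m"
proof -
  have "(\<integral>x. poly f x * poly (p m) x \<partial>\<mu>) = (\<integral>x. (\<Sum>k\<le>n. c k * (poly (p k) x * poly (p m) x)) \<partial>\<mu>)"
    by (simp add: assms(1) poly_sum sum_distrib_right mult.assoc)
  also have "\<dots> = (\<Sum>k\<le>n. c k * (\<integral>x. poly (p k) x * poly (p m) x \<partial>\<mu>))"
    by (simp add: integral_sum integrable_mult_right int_pp)
  also have "\<dots> = (\<Sum>k\<le>n. if k = m then c k else 0)"
    by (intro sum.cong) (auto simp: orth)
  also have "\<dots> = c m" using assms(2) by (simp add: sum.delta)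
  finally show ?thesis .
qed

end



lemma map_add_r: "map_poly complex_of_real (f + g) = map_poly complex_of_real f + map_poly complex_of_real g"
  by (intro poly_eqI) (simp add: coeff_map_poly)

lemma ev_sum: "finite A \<Longrightarrow> poly (map_poly complex_of_real (\<Sum>k\<in>A. smult (c k) (q k))) z
   = (\<Sum>k\<in>A. of_real (c k) * poly (map_poly complex_of_real (q k)) z)"
  by (induction A rule: finite_induct) (simp_all add: map_add_r map_poly_smult)

lemma ev_x: "poly (map_poly complex_of_real ([:0,1:] * q)) z = z * poly (map_poly complex_of_real q) z"
  by (simp add: map_poly_pCons)

context OP begin

lemma AE_supp: "AE x in \<mu>. x \<in> measure_support \<mu>"
proof -
  define F where "F = {U. open U \<and> emeasure \<mu> U = 0}"
  have UF: "\<Union>F = - measure_support \<mu>"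
    unfolding F_def measure_support_def by (auto simp: not_less)
  obtain F' where F': "F' \<subseteq> F" "countable F'" "\<Union>F' = \<Union>F"
    using Lindelof[of F] unfolding F_def by blast
  have "(\<Union>U\<in>F'. U) \<in> null_sets \<mu>"
  proof (rule null_sets_UN')
    show "countable F'" by fact
    fix U assume "U \<in> F'"
    hence "open U" "emeasure \<mu> U = 0" using F' unfolding F_def by auto
    moreover have "U \<in> sets \<mu>" using \<open>open U\<close> sb by simp
    ultimately show "U \<in> null_sets \<mu>" by (auto simp: null_sets_def)
  qed
  thus ?thesis
    by (rule AE_I') (use F' UF in auto)
qed

definition M :: "nat \<Rightarrow> nat \<Rightarrow> real" where
  "M j k = (\<integral>x. x * poly (p j) x * poly (p k) x \<partial>\<mu>)"

lemma M_sym: "M j k = M k j"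
  unfolding M_def by (simp add: mult.commute mult.left_commute)

lemma poly_integ': "integrable \<mu> (\<lambda>x. poly f x)" by (rule poly_integ)

lemma rec_poly: "j < n \<Longrightarrow> [:0,1:] * p j = (\<Sum>k\<le>n. smult (M j k) (p k))"
proof -
  assume "j < n"
  have "degree ([:0,1:] * p j) \<le> n"
    using \<open>j < n\<close> deg[of j] by (simp add: degree_mult_le)
  then obtain c where c: "[:0,1:] * p j = (\<Sum>k\<le>n. smult (c k) (p k))" using expand by blast
  have "c k = M j k" if "k \<le> n" for k
    using coeff_int[OF c that] by (simp add: M_def)
  with c show ?thesis by simp
qed

lemma rec_ev: "j < n \<Longrightarrow> z * poly (map_poly complex_of_real (p j)) z =
   (\<Sum>k\<le>n. of_real (M j k) * poly (map_poly complex_of_real (p k)) z)"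
  using arg_cong[OF rec_poly, of j n "\<lambda>q. poly (map_poly complex_of_real q) z"]
  by (simp only: ev_x ev_sum finite_atMost)

lemma bil:
  assumes "finite J" "finite L"
  shows "(\<integral>x. poly W x * poly (\<Sum>j\<in>J. smult (\<alpha> j) (p j)) x * poly (\<Sum>k\<in>L. smult (\<beta> k) (p k)) x \<partial>\<mu>)
     = (\<Sum>j\<in>J. \<Sum>k\<in>L. \<alpha> j * \<beta> k * (\<integral>x. poly W x * poly (p j) x * poly (p k) x \<partial>\<mu>))"
proof -
  have I: "integrable \<mu> (\<lambda>x. poly W x * poly (p j) x * poly (p k) x)" for j k
    using poly_integ[of "W * p j * p k"] by simp
  have "(\<lambda>x. poly W x * poly (\<Sum>j\<in>J. smult (\<alpha> j) (p j)) x * poly (\<Sum>k\<in>L. smult (\<beta> k) (p k)) x)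
     = (\<lambda>x. \<Sum>j\<in>J. \<Sum>k\<in>L. \<alpha> j * \<beta> k * (poly W x * poly (p j) x * poly (p k) x))"
    by (simp add: poly_sum sum_distrib_left sum_distrib_right mult_ac)
  moreover have "(\<integral>x. (\<Sum>j\<in>J. \<Sum>k\<in>L. \<alpha> j * \<beta> k * (poly W x * poly (p j) x * poly (p k) x)) \<partial>\<mu>)
     = (\<Sum>j\<in>J. \<Sum>k\<in>L. \<alpha> j * \<beta> k * (\<integral>x. poly W x * poly (p j) x * poly (p k) x \<partial>\<mu>))"
    using I by (simp add: integral_sum)
  ultimately show ?thesis by simp
qed

end



lemma amgm_lam: fixes y w l :: real assumes "l > 0"
  shows "\<bar>y * w\<bar> \<le> (l * (y * y) + w * w / l) / 2"
proof -
  have "0 \<le> (l * \<bar>y\<bar> - \<bar>w\<bar>)^2" by simp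
  hence "2 * l * \<bar>y * w\<bar> \<le> l * l * (y * y) + w * w"
    by (simp add: power2_eq_square algebra_simps abs_mult) 
  hence "\<bar>y * w\<bar> \<le> (l * l * (y * y) + w * w) / (2 * l)" using assms by (simp add: pos_le_divide_eq mult.commute mult.left_commute)
  also have "\<dots> = (l * (y * y) + w * w / l) / 2" using assms by (simp add: field_simps)
  finally show ?thesis .
qed

context OP begin

lemma int_xc: "(\<integral>x. (x - c) * poly (p j) x * poly (p k) x \<partial>\<mu>) = M j k - c * (if j = k then 1 else 0)"
proof -
  have i1: "integrable \<mu> (\<lambda>x. x * poly (p j) x * poly (p k) x)"
    using poly_integ[of "[:0,1:] * p j * p k"] by (simp add: mult.assoc)
  have "(\<lambda>x. (x - c) * poly (p j) x * poly (p k) x) =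
        (\<lambda>x. x * poly (p j) x * poly (p k) x - c * (poly (p j) x * poly (p k) x))"
    by (simp add: algebra_simps)
  hence "(\<integral>x. (x - c) * poly (p j) x * poly (p k) x \<partial>\<mu>) =
     (\<integral>x. x * poly (p j) x * poly (p k) x \<partial>\<mu>) - c * (\<integral>x. poly (p j) x * poly (p k) x \<partial>\<mu>)"
    using i1 int_pp by simp
  thus ?thesis by (simp add: M_def orth)
qed

lemma cs_bound:
  assumes S: "measure_support \<mu> \<subseteq> {a..b}" and cD: "\<forall>x\<in>{a..b}. \<bar>x - c\<bar> \<le> D" and D: "D > 0"
  shows "(\<integral>x. (x - c) * poly A x * poly (p n) x \<partial>\<mu>)^2 \<le> D^2 * (\<integral>x. poly A x * poly A x \<partial>\<mu>)"
proof -
  define Q where "Q = (\<integral>x. (x - c) * poly A x * poly (p n) x \<partial>\<mu>)"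
  define Ka where "Ka = (\<integral>x. poly A x * poly A x \<partial>\<mu>)"
  have Ka0: "Ka \<ge> 0" unfolding Ka_def by (intro integral_nonneg_AE) simp
  have iQ: "integrable \<mu> (\<lambda>x. (x - c) * poly A x * poly (p n) x)"
    using poly_integ[of "[:-c,1:] * A * p n"] by (simp add: algebra_simps)
  have iA: "integrable \<mu> (\<lambda>x. poly A x * poly A x)"
    using poly_integ[of "A * A"] by simp
  have bnd: "\<bar>Q\<bar> \<le> D * (l * Ka + 1 / l) / 2" if l: "l > 0" for l
  proof -
    define G where "G = (\<lambda>x. D * (l * (poly A x * poly A x) + poly (p n) x * poly (p n) x / l) / 2)"
    have iG: "integrable \<mu> G" unfolding G_def using iA int_pp[of n n] by simp
    have intG: "integral\<^sup>L \<mu> G = D * (l * Ka + 1 / l) / 2"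
      unfolding G_def Ka_def using iA int_pp[of n n] orth[of n n]
      by (simp add: integral_add integral_mult_right integral_divide)
    have pw: "\<bar>(x - c) * poly A x * poly (p n) x\<bar> \<le> G x" if "x \<in> {a..b}" for x
    proof -
      have "\<bar>(x - c) * poly A x * poly (p n) x\<bar> = \<bar>x - c\<bar> * \<bar>poly A x * poly (p n) x\<bar>"
        by (simp add: abs_mult)
      also have "\<dots> \<le> D * ((l * (poly A x * poly A x) + poly (p n) x * poly (p n) x / l) / 2)"
        by (intro mult_mono amgm_lam l) (use cD that in auto)
      finally show ?thesis by (simp add: G_def)
    qed
    have AE: "AE x in \<mu>. \<bar>(x - c) * poly A x * poly (p n) x\<bar> \<le> G x"
      using AE_supp by eventually_elim (use S pw in auto)
    have "Q \<le> integral\<^sup>L \<mu> G" unfolding Q_def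
      by (rule integral_mono_AE[OF iQ iG]) (use AE in \<open>eventually_elim, auto\<close>)
    moreover have "-Q \<le> integral\<^sup>L \<mu> G"
    proof -
      have "-Q = (\<integral>x. - ((x - c) * poly A x * poly (p n) x) \<partial>\<mu>)" by (simp add: Q_def)
      also have "\<dots> \<le> integral\<^sup>L \<mu> G"
        by (rule integral_mono_AE) (use iQ iG AE in \<open>auto elim!: eventually_mono\<close>)
      finally show ?thesis .
    qed
    ultimately show ?thesis using intG by linarith
  qed
  show ?thesis
  proof (cases "Ka = 0")
    case True
    have "Q = 0"
    proof (rule ccontr)
      assume "Q \<noteq> 0"
      hence Qp: "\<bar>Q\<bar> > 0" by simp
      have lp: "D / \<bar>Q\<bar> > 0" using D Qp by (rule divide_pos_pos)
      have h: "\<bar>Q\<bar> \<le> D * ((D / \<bar>Q\<bar>) * Ka + 1 / (D / \<bar>Q\<bar>)) / 2" by (rule bnd[OF lp])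
      have e: "D * ((D / \<bar>Q\<bar>) * Ka + 1 / (D / \<bar>Q\<bar>)) / 2 = \<bar>Q\<bar> / 2"
        using True D by simp
      have "\<bar>Q\<bar> \<le> \<bar>Q\<bar> / 2" using h e by (rule ord_le_eq_trans)
      with Qp show False by linarith
    qed
    thus ?thesis using True by (simp add: Q_def Ka_def)
  next
    case False
    hence Kp: "Ka > 0" using Ka0 by simp
    have lp: "1 / sqrt Ka > 0" using Kp by simp
    have h: "\<bar>Q\<bar> \<le> D * ((1 / sqrt Ka) * Ka + 1 / (1 / sqrt Ka)) / 2" by (rule bnd[OF lp])
    have e1: "(1 / sqrt Ka) * Ka = sqrt Ka" using Kp by (simp add: real_div_sqrt)
    have "D * ((1 / sqrt Ka) * Ka + 1 / (1 / sqrt Ka)) / 2 = D * sqrt Ka"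
      unfolding e1 by simp
    with h have h2: "\<bar>Q\<bar> \<le> D * sqrt Ka" by (rule ord_le_eq_trans)
    have "\<bar>Q\<bar>^2 \<le> (D * sqrt Ka)^2" by (rule power_mono[OF h2]) simp
    also have "(D * sqrt Ka)^2 = D^2 * Ka" using Kp by (simp add: power_mult_distrib)
    finally show ?thesis by (simp add: Q_def Ka_def)
  qed
qed

end


context OP begin

lemma bil1:
  assumes "finite J"
  shows "(\<integral>x. poly W x * poly (\<Sum>j\<in>J. smult (\<alpha> j) (p j)) x * poly (p m) x \<partial>\<mu>)
     = (\<Sum>j\<in>J. \<alpha> j * (\<integral>x. poly W x * poly (p j) x * poly (p m) x \<partial>\<mu>))"
  using bil[OF assms, of "{m}" W \<alpha> "\<lambda>_. 1"] by simp

lemma sq_sum: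
  "(\<integral>x. poly (\<Sum>j<n. smult (\<alpha> j) (p j)) x * poly (\<Sum>j<n. smult (\<alpha> j) (p j)) x \<partial>\<mu>) = (\<Sum>j<n. \<alpha> j ^ 2)"
proof -
  have "(\<integral>x. poly (\<Sum>j<n. smult (\<alpha> j) (p j)) x * poly (\<Sum>j<n. smult (\<alpha> j) (p j)) x \<partial>\<mu>)
     = (\<integral>x. poly 1 x * poly (\<Sum>j<n. smult (\<alpha> j) (p j)) x * poly (\<Sum>j<n. smult (\<alpha> j) (p j)) x \<partial>\<mu>)" by simp
  also have "\<dots> = (\<Sum>j<n. \<Sum>k<n. \<alpha> j * \<alpha> k * (if j = k then 1 else 0))"
    by (subst bil) (simp_all add: orth)
  also have "\<dots> = (\<Sum>j<n. \<alpha> j ^ 2)"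
    by (simp add: power2_eq_square if_distrib[of "\<lambda>t. _ * t"] sum.delta cong: if_cong)
  finally show ?thesis .
qed

lemma x_sum:
  "(\<integral>x. x * poly (\<Sum>j<n. smult (\<alpha> j) (p j)) x * poly (\<Sum>j<n. smult (\<alpha> j) (p j)) x \<partial>\<mu>)
     = (\<Sum>j<n. \<Sum>k<n. \<alpha> j * \<alpha> k * M j k)"
proof -
  have "(\<integral>x. x * poly (\<Sum>j<n. smult (\<alpha> j) (p j)) x * poly (\<Sum>j<n. smult (\<alpha> j) (p j)) x \<partial>\<mu>)
     = (\<integral>x. poly [:0,1:] x * poly (\<Sum>j<n. smult (\<alpha> j) (p j)) x * poly (\<Sum>j<n. smult (\<alpha> j) (p j)) x \<partial>\<mu>)" by simp
  also have "\<dots> = (\<Sum>j<n. \<Sum>k<n. \<alpha> j * \<alpha> k * M j k)"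
    by (subst bil) (simp_all add: M_def)
  finally show ?thesis .
qed

lemma xc_sum:
  "(\<integral>x. (x - c) * poly (\<Sum>j<n. smult (\<alpha> j) (p j)) x * poly (p n) x \<partial>\<mu>) = (\<Sum>j<n. M j n * \<alpha> j)"
proof -
  have "(\<integral>x. (x - c) * poly (\<Sum>j<n. smult (\<alpha> j) (p j)) x * poly (p n) x \<partial>\<mu>)
     = (\<integral>x. poly [:-c,1:] x * poly (\<Sum>j<n. smult (\<alpha> j) (p j)) x * poly (p n) x \<partial>\<mu>)" by simp
  also have "\<dots> = (\<Sum>j<n. \<alpha> j * (\<integral>x. (x - c) * poly (p j) x * poly (p n) x \<partial>\<mu>))"
    by (subst bil1) simp_all
  also have "\<dots> = (\<Sum>j<n. M j n * \<alpha> j)"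
    by (intro sum.cong) (simp_all add: int_xc)
  finally show ?thesis .
qed

end


context OP begin

lemma t_bound:
  assumes S: "measure_support \<mu> \<subseteq> {a..b}"
  shows "a * ((\<Sum>j<n. \<alpha> j ^ 2) + (\<Sum>j<n. \<beta> j ^ 2)) \<le>
           (\<Sum>j<n. \<Sum>k<n. \<alpha> j * \<alpha> k * M j k) + (\<Sum>j<n. \<Sum>k<n. \<beta> j * \<beta> k * M j k)"
    and "(\<Sum>j<n. \<Sum>k<n. \<alpha> j * \<alpha> k * M j k) + (\<Sum>j<n. \<Sum>k<n. \<beta> j * \<beta> k * M j k)
          \<le> b * ((\<Sum>j<n. \<alpha> j ^ 2) + (\<Sum>j<n. \<beta> j ^ 2))"
proof -
  define Ap where "Ap = (\<Sum>j<n. smult (\<alpha> j) (p j))"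
  define Bp where "Bp = (\<Sum>j<n. smult (\<beta> j) (p j))"
  define f where "f = (\<lambda>x. x * poly Ap x * poly Ap x + x * poly Bp x * poly Bp x)"
  define g where "g = (\<lambda>x. poly Ap x * poly Ap x + poly Bp x * poly Bp x)"
  have iA: "integrable \<mu> (\<lambda>x. x * poly Ap x * poly Ap x)"
    using poly_integ[of "[:0,1:] * Ap * Ap"] by (simp add: mult.assoc)
  have iB: "integrable \<mu> (\<lambda>x. x * poly Bp x * poly Bp x)"
    using poly_integ[of "[:0,1:] * Bp * Bp"] by (simp add: mult.assoc)
  have iA2: "integrable \<mu> (\<lambda>x. poly Ap x * poly Ap x)"
    using poly_integ[of "Ap * Ap"] by simp
  have iB2: "integrable \<mu> (\<lambda>x. poly Bp x * poly Bp x)"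
    using poly_integ[of "Bp * Bp"] by simp
  have iF: "integrable \<mu> f" unfolding f_def using iA iB by simp
  have iG: "integrable \<mu> g" unfolding g_def using iA2 iB2 by simp
  have intF: "integral\<^sup>L \<mu> f = (\<Sum>j<n. \<Sum>k<n. \<alpha> j * \<alpha> k * M j k) + (\<Sum>j<n. \<Sum>k<n. \<beta> j * \<beta> k * M j k)"
    unfolding f_def using iA iB by (simp add: Ap_def Bp_def x_sum)
  have intG: "integral\<^sup>L \<mu> g = (\<Sum>j<n. \<alpha> j ^ 2) + (\<Sum>j<n. \<beta> j ^ 2)"
    unfolding g_def using iA2 iB2 by (simp add: Ap_def Bp_def sq_sum)
  have gnn: "g x \<ge> 0" for x unfolding g_def by simp
  have fx: "f x = x * g x" for x unfolding f_def g_def by (simp add: algebra_simps)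
  have AE: "AE x in \<mu>. x \<in> {a..b}" using AE_supp by eventually_elim (use S in auto)
  have "AE x in \<mu>. a * g x \<le> f x" using AE
    by eventually_elim (simp add: fx gnn mult_right_mono)
  hence "(\<integral>x. a * g x \<partial>\<mu>) \<le> integral\<^sup>L \<mu> f"
    by (intro integral_mono_AE iF) (use iG in simp)
  thus "a * ((\<Sum>j<n. \<alpha> j ^ 2) + (\<Sum>j<n. \<beta> j ^ 2)) \<le>
           (\<Sum>j<n. \<Sum>k<n. \<alpha> j * \<alpha> k * M j k) + (\<Sum>j<n. \<Sum>k<n. \<beta> j * \<beta> k * M j k)"
    using intF intG by simp
  have "AE x in \<mu>. f x \<le> b * g x" using AE
    by eventually_elim (simp add: fx gnn mult_right_mono)
  hence "integral\<^sup>L \<mu> f \<le> (\<integral>x. b * g x \<partial>\<mu>)"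
    by (intro integral_mono_AE iF) (use iG in simp)
  thus "(\<Sum>j<n. \<Sum>k<n. \<alpha> j * \<alpha> k * M j k) + (\<Sum>j<n. \<Sum>k<n. \<beta> j * \<beta> k * M j k)
          \<le> b * ((\<Sum>j<n. \<alpha> j ^ 2) + (\<Sum>j<n. \<beta> j ^ 2))"
    using intF intG by simp
qed

end


context OP begin

lemma main_step:
  fixes z :: complex
  assumes n1: "n \<ge> 1" and S: "measure_support \<mu> \<subseteq> {a..b}" and cD: "\<forall>x\<in>{a..b}. \<bar>x - c\<bar> \<le> D" and Dp: "D > 0"
    and dm: "\<forall>m\<in>{a..b}. d \<le> cmod (z - of_real m)" and d0: "d \<ge> 0"
  shows "d^2 * (\<Sum>j<n. (cmod (poly (map_poly complex_of_real (p j)) z))^2)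
          \<le> (cmod (poly (map_poly complex_of_real (p n)) z))^2 * D^2"
proof -
  define ev where "ev j = poly (map_poly complex_of_real (p j)) z" for j
  define \<alpha> where "\<alpha> j = Re (ev j)" for j
  define \<beta> where "\<beta> j = Im (ev j)" for j
  define u where "u = Re z"
  define v where "v = Im z"
  have E: "z * ev j = (\<Sum>k\<le>n. of_real (M j k) * ev k)" if "j < n" for j
    using rec_ev[OF that] unfolding ev_def .
  have E1: "u * \<alpha> j - v * \<beta> j = (\<Sum>k\<le>n. M j k * \<alpha> k)" if "j < n" for j
    using arg_cong[OF E[OF that], of Re] by (simp add: \<alpha>_def \<beta>_def u_def v_def)
  have E2: "u * \<beta> j + v * \<alpha> j = (\<Sum>k\<le>n. M j k * \<beta> k)" if "j < n" for j
    using arg_cong[OF E[OF that], of Im] by (simp add: \<alpha>_def \<beta>_def u_def v_def algebra_simps)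
  define KA where "KA = (\<Sum>j<n. \<alpha> j ^ 2)"
  define KB where "KB = (\<Sum>j<n. \<beta> j ^ 2)"
  define K where "K = KA + KB"
  have cm: "(cmod (ev j))^2 = \<alpha> j ^ 2 + \<beta> j ^ 2" for j
    by (simp add: \<alpha>_def \<beta>_def cmod_power2)
  have Ks: "K = (\<Sum>j<n. \<alpha> j ^ 2 + \<beta> j ^ 2)" by (simp add: K_def KA_def KB_def sum.distrib)
  have ev0: "ev 0 = 1" by (simp add: ev_def p0 map_poly_pCons)
  have K1: "K \<ge> 1"
  proof -
    have "\<alpha> 0 ^ 2 + \<beta> 0 ^ 2 \<le> (\<Sum>j<n. \<alpha> j ^ 2 + \<beta> j ^ 2)"
      by (rule member_le_sum) (use n1 in auto)
    thus ?thesis using ev0 by (simp add: Ks \<alpha>_def \<beta>_def)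
  qed
  define t where "t = (\<Sum>j<n. \<Sum>k<n. \<alpha> j * \<alpha> k * M j k) + (\<Sum>j<n. \<Sum>k<n. \<beta> j * \<beta> k * M j k)"
  define P where "P = (\<Sum>j<n. M j n * \<alpha> j)"
  define R where "R = (\<Sum>j<n. M j n * \<beta> j)"
  have split: "(\<Sum>k\<le>n. f k) = (\<Sum>k<n. f k) + f n" for f :: "nat \<Rightarrow> real"
    by (simp add: lessThan_Suc_atMost[symmetric])
  have uK: "u * K = t + \<alpha> n * P + \<beta> n * R"
  proof -
    have "u * K = (\<Sum>j<n. u * (\<alpha> j ^ 2 + \<beta> j ^ 2))" by (simp add: Ks sum_distrib_left)
    also have "\<dots> = (\<Sum>j<n. \<alpha> j * (u * \<alpha> j - v * \<beta> j) + \<beta> j * (u * \<beta> j + v * \<alpha> j))"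
      by (rule sum.cong) (simp_all add: power2_eq_square algebra_simps)
    also have "\<dots> = (\<Sum>j<n. \<alpha> j * (\<Sum>k\<le>n. M j k * \<alpha> k) + \<beta> j * (\<Sum>k\<le>n. M j k * \<beta> k))"
      by (rule sum.cong) (simp_all add: E1 E2)
    also have "\<dots> = (\<Sum>j<n. \<alpha> j * ((\<Sum>k<n. M j k * \<alpha> k) + M j n * \<alpha> n) + \<beta> j * ((\<Sum>k<n. M j k * \<beta> k) + M j n * \<beta> n))"
      by (simp only: split)
    also have "\<dots> = t + \<alpha> n * P + \<beta> n * R"
      by (simp add: t_def P_def R_def sum.distrib sum_distrib_left sum_distrib_right algebra_simps)
    finally show ?thesis .
  qed
  have Z: "(\<Sum>j<n. \<Sum>k<n. \<alpha> j * (M j k * \<beta> k)) = (\<Sum>j<n. \<Sum>k<n. \<beta> j * (M j k * \<alpha> k))"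
  proof -
    have "(\<Sum>j<n. \<Sum>k<n. \<beta> j * (M j k * \<alpha> k)) = (\<Sum>k<n. \<Sum>j<n. \<beta> j * (M j k * \<alpha> k))"
      by (rule sum.swap)
    also have "\<dots> = (\<Sum>k<n. \<Sum>j<n. \<alpha> k * (M k j * \<beta> j))"
      by (simp add: M_sym mult_ac)
    finally show ?thesis by simp
  qed
  have vK: "v * K = \<beta> n * P - \<alpha> n * R"
  proof -
    have "v * K = (\<Sum>j<n. v * (\<alpha> j ^ 2 + \<beta> j ^ 2))" by (simp add: Ks sum_distrib_left)
    also have "\<dots> = (\<Sum>j<n. \<alpha> j * (u * \<beta> j + v * \<alpha> j) - \<beta> j * (u * \<alpha> j - v * \<beta> j))"
      by (rule sum.cong) (simp_all add: power2_eq_square algebra_simps)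
    also have "\<dots> = (\<Sum>j<n. \<alpha> j * (\<Sum>k\<le>n. M j k * \<beta> k) - \<beta> j * (\<Sum>k\<le>n. M j k * \<alpha> k))"
      by (rule sum.cong) (simp_all add: E1 E2)
    also have "\<dots> = (\<Sum>j<n. \<alpha> j * ((\<Sum>k<n. M j k * \<beta> k) + M j n * \<beta> n) - \<beta> j * ((\<Sum>k<n. M j k * \<alpha> k) + M j n * \<alpha> n))"
      by (simp only: split)
    also have "\<dots> = ((\<Sum>j<n. \<Sum>k<n. \<alpha> j * (M j k * \<beta> k)) - (\<Sum>j<n. \<Sum>k<n. \<beta> j * (M j k * \<alpha> k))) + (\<beta> n * P - \<alpha> n * R)"
      by (simp add: P_def R_def sum.distrib sum_subtractf sum_distrib_left sum_distrib_right algebra_simps)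
    also have "\<dots> = \<beta> n * P - \<alpha> n * R" using Z by simp
    finally show ?thesis .
  qed
  have Kp: "K > 0" using K1 by simp
  have tb1: "a * K \<le> t" and tb2: "t \<le> b * K"
    using t_bound[OF S, where n=n and \<alpha>=\<alpha> and \<beta>=\<beta>] by (simp_all add: t_def K_def KA_def KB_def)
  define m where "m = t / K"
  have mab: "m \<in> {a..b}" using tb1 tb2 Kp by (simp add: m_def field_simps)
  have "d \<le> cmod (z - of_real m)" using dm mab by blast
  hence "d^2 \<le> (cmod (z - of_real m))^2" using d0 by (simp add: power_mono)
  also have "\<dots> = (u - m)^2 + v^2" by (simp add: cmod_power2 u_def v_def)
  finally have "d^2 * K^2 \<le> ((u - m)^2 + v^2) * K^2" by (simp add: mult_right_mono)
  also have "\<dots> = (u * K - t)^2 + (v * K)^2" using Kp by (simp add: m_def power2_eq_square field_simps)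
  also have "\<dots> = (\<alpha> n ^ 2 + \<beta> n ^ 2) * (P^2 + R^2)"
    unfolding uK vK by (simp add: power2_eq_square algebra_simps)
  also have "\<dots> \<le> (\<alpha> n ^ 2 + \<beta> n ^ 2) * (D^2 * KA + D^2 * KB)"
  proof (intro mult_left_mono add_mono)
    show "P^2 \<le> D^2 * KA"
      using cs_bound[OF S cD Dp, of "\<Sum>j<n. smult (\<alpha> j) (p j)" n] by (simp add: xc_sum sq_sum P_def KA_def)
    show "R^2 \<le> D^2 * KB"
      using cs_bound[OF S cD Dp, of "\<Sum>j<n. smult (\<beta> j) (p j)" n] by (simp add: xc_sum sq_sum R_def KB_def)
  qed simp
  also have "\<dots> = (cmod (ev n))^2 * D^2 * K" by (simp add: cm K_def algebra_simps)
  finally have "d^2 * K * K \<le> (cmod (ev n))^2 * D^2 * K" by (simp add: power2_eq_square mult.assoc)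
  hence "d^2 * K \<le> (cmod (ev n))^2 * D^2" using Kp by simp
  moreover have "K = (\<Sum>j<n. (cmod (ev j))^2)" by (simp add: Ks cm)
  ultimately show ?thesis by (simp add: ev_def)
qed

end



lemma liminf_part:
  fixes r :: real and f :: "nat \<Rightarrow> real"
  assumes r: "r > 0" and fb: "\<And>n. n \<ge> 1 \<Longrightarrow> (f n)^2 \<ge> r * (1 + r) ^ (n - 1)"
    and f0: "\<And>n. f n \<ge> 0"
  shows "liminf (\<lambda>n. ereal (f n powr (1 / real n))) \<ge> ereal (sqrt (1 + r))"
proof -
  define g where "g n = (r / (1 + r)) powr (1 / (2 * real n)) * sqrt (1 + r)" for n
  have le: "g n \<le> f n powr (1 / real n)" if n: "n \<ge> 1" for n
  proof -
    define L where "L = r * (1 + r) ^ (n - 1)"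
    have Lp: "L > 0" using r by (simp add: L_def)
    have X: "f n > 0"
    proof -
      have "(f n)^2 > 0" using fb[OF n] Lp L_def by linarith
      thus ?thesis using f0[of n] by (metis less_eq_real_def power2_eq_square mult_zero_left less_irrefl)
    qed
    have "f n powr (1 / real n) = ((f n) powr 2) powr (1 / (2 * real n))"
      using n by (simp add: powr_powr)
    also have "(f n) powr 2 = (f n)^2" using X powr_realpow[of "f n" 2] by simp
    finally have e1: "f n powr (1 / real n) = ((f n)^2) powr (1 / (2 * real n))" .
    have e2: "L = (r / (1 + r)) * (1 + r) powr (real n)"
      using n r by (simp add: L_def powr_realpow power_eq_if field_simps)
    have "L powr (1 / (2 * real n)) = (r / (1 + r)) powr (1 / (2 * real n)) * ((1 + r) powr (real n)) powr (1 / (2 * real n))"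
      unfolding e2 by (rule powr_mult)
    also have "((1 + r) powr (real n)) powr (1 / (2 * real n)) = (1 + r) powr (1/2)"
      using n by (simp add: powr_powr)
    also have "(1 + r) powr (1/2) = sqrt (1 + r)" using r by (simp add: powr_half_sqrt)
    finally have e3: "L powr (1 / (2 * real n)) = g n" by (simp add: g_def)
    have "L powr (1 / (2 * real n)) \<le> ((f n)^2) powr (1 / (2 * real n))"
      by (rule powr_mono2) (use Lp fb[OF n] in \<open>auto simp: L_def\<close>)
    thus ?thesis using e1 e3 by simp
  qed
  have lim: "g \<longlonglongrightarrow> sqrt (1 + r)"
  proof -
    have "(\<lambda>n. 1 / (2 * real n)) \<longlonglongrightarrow> 0" by real_asymp
    hence "(\<lambda>n. (r / (1 + r)) powr (1 / (2 * real n))) \<longlonglongrightarrow> (r / (1 + r)) powr 0"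
      using r by (intro tendsto_powr tendsto_const) auto
    hence "(\<lambda>n. (r / (1 + r)) powr (1 / (2 * real n)) * sqrt (1 + r)) \<longlonglongrightarrow> 1 * sqrt (1 + r)"
      using r by (intro tendsto_mult tendsto_const) simp
    moreover have "g = (\<lambda>n. (r / (1 + r)) powr (1 / (2 * real n)) * sqrt (1 + r))"
      by (simp add: g_def fun_eq_iff)
    ultimately show ?thesis by simp
  qed
  have "liminf (\<lambda>n. ereal (g n)) = ereal (sqrt (1 + r))"
    by (rule lim_imp_Liminf) (use lim in simp_all)
  moreover have "liminf (\<lambda>n. ereal (g n)) \<le> liminf (\<lambda>n. ereal (f n powr (1 / real n)))"
    by (rule Liminf_mono) (use le in \<open>auto simp: eventually_sequentially\<close>)
  ultimately show ?thesis by simp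
qed


theorem proposition2p2:
  fixes \<mu> :: "real measure" and p :: "nat \<Rightarrow> real poly" and z :: complex
  assumes "prob_space \<mu>" and "sets \<mu> = sets borel"
    and "compact (measure_support \<mu>)" and "infinite (measure_support \<mu>)"
    and "orthonormal_polys \<mu> p"
    and "H = convex hull (measure_support \<mu>)"
    and "D = diameter H / 2"
    and "z \<notin> complex_of_real ` H"
    and "d = infdist z (complex_of_real ` H)"
  shows "(\<forall>n\<ge>1. (cmod (poly (map_poly complex_of_real (p n)) z))\<^sup>2
                 \<ge> (d / D)\<^sup>2 * (1 + (d / D)\<^sup>2) ^ (n - 1))
       \<and> (\<forall>n. poly (map_poly complex_of_real (p n)) z \<noteq> 0)
       \<and> liminf (\<lambda>n. ereal (cmod (poly (map_poly complex_of_real (p n)) z) powr (1 / real n)))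
           \<ge> ereal (sqrt (1 + (d / D)\<^sup>2))
       \<and> sqrt (1 + (d / D)\<^sup>2) > 1"
proof -
  interpret OP \<mu> p by (rule OP.intro[OF assms(1,2,5)])
  define S where "S = measure_support \<mu>"
  have cS: "compact S" and iS: "infinite S" using assms(3,4) by (simp_all add: S_def)
  hence ne: "S \<noteq> {}" by auto
  obtain a where a: "a \<in> S" "\<forall>t\<in>S. a \<le> t" using compact_attains_inf[OF cS ne] by blast
  obtain b where b: "b \<in> S" "\<forall>t\<in>S. t \<le> b" using compact_attains_sup[OF cS ne] by blast
  have Sab: "S \<subseteq> {a..b}" using a b by auto
  have ab: "a < b"
  proof (rule ccontr)
    assume "\<not> a < b"
    hence "S \<subseteq> {a}" using Sab by auto
    hence "finite S" using finite_subset by blast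
    thus False using iS by simp
  qed
  have Hab: "H = {a..b}"
  proof
    show "H \<subseteq> {a..b}" unfolding assms(6) S_def[symmetric]
      by (rule hull_minimal[OF Sab]) (rule convex_real_interval)
    have "convex H" unfolding assms(6) by (rule convex_convex_hull)
    moreover have "a \<in> H" "b \<in> H" using a b hull_inc[of _ S] by (auto simp: assms(6) S_def)
    ultimately have "closed_segment a b \<subseteq> H" using convex_contains_segment by blast
    thus "{a..b} \<subseteq> H" using ab by (simp add: closed_segment_eq_real_ivl)
  qed
  have Dv: "D = (b - a) / 2" using assms(7) Hab ab by simp
  have Dp: "D > 0" using ab Dv by simp
  define c where "c = (a + b) / 2"
  have cD: "\<forall>x\<in>{a..b}. \<bar>x - c\<bar> \<le> D" unfolding c_def Dv by (auto simp: abs_le_iff field_simps)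
  have dm: "\<forall>m\<in>{a..b}. d \<le> cmod (z - of_real m)"
  proof
    fix m :: real assume "m \<in> {a..b}"
    hence "of_real m \<in> complex_of_real ` H" using Hab by auto
    hence "infdist z (complex_of_real ` H) \<le> dist z (of_real m)" by (rule infdist_le)
    thus "d \<le> cmod (z - of_real m)" using assms(9) by (simp add: dist_norm)
  qed
  have dp: "d > 0"
  proof -
    have "compact (complex_of_real ` H)" unfolding Hab
      by (intro compact_continuous_image continuous_intros) simp
    hence cl: "closed (complex_of_real ` H)" by (rule compact_imp_closed)
    have "complex_of_real ` H \<noteq> {}" using Hab ab by auto
    hence "infdist z (complex_of_real ` H) \<noteq> 0" using in_closed_iff_infdist_zero[OF cl] assms(8) by blast
    thus ?thesis using assms(9) infdist_nonneg[of z] by (simp add: order_le_neq_trans)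
  qed
  define r where "r = (d / D)^2"
  have rp: "r > 0" using dp Dp by (simp add: r_def)
  define A where "A n = cmod (poly (map_poly complex_of_real (p n)) z)" for n
  define Kf where "Kf n = (\<Sum>j<n. (A j)^2)" for n
  have A0: "A 0 = 1" by (simp add: A_def p0 map_poly_pCons)
  have step: "(A n)^2 \<ge> r * Kf n" if "n \<ge> 1" for n
  proof -
    have "d^2 * Kf n \<le> (A n)^2 * D^2"
      using main_step[OF that Sab[unfolded S_def] cD Dp dm less_imp_le[OF dp]] unfolding A_def Kf_def
      by simp
    hence "d^2 / D^2 * Kf n \<le> (A n)^2" using Dp by (simp add: field_simps)
    thus ?thesis by (simp add: r_def power_divide)
  qed
  have Kb: "Kf n \<ge> (1 + r) ^ (n - 1)" if "n \<ge> 1" for n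
    using that
  proof (induction n rule: nat_induct_at_least)
    case base thus ?case by (simp add: Kf_def A0)
  next
    case (Suc n)
    have "Kf (Suc n) = Kf n + (A n)^2" by (simp add: Kf_def)
    also have "\<dots> \<ge> (1 + r) * Kf n" using step[OF Suc.hyps(1)] by (simp add: algebra_simps)
    finally have "Kf (Suc n) \<ge> (1 + r) * Kf n" .
    moreover have "(1 + r) * Kf n \<ge> (1 + r) * (1 + r) ^ (n - 1)"
      using Suc.IH rp by (intro mult_left_mono) auto
    moreover have "(1 + r) * (1 + r) ^ (n - 1) = (1 + r) ^ (Suc n - 1)"
      using Suc.hyps by (cases n) auto
    ultimately show ?case by linarith
  qed
  have main: "(A n)^2 \<ge> r * (1 + r) ^ (n - 1)" if "n \<ge> 1" for n
  proof -
    have "r * (1 + r) ^ (n - 1) \<le> r * Kf n" using Kb[OF that] rp by (intro mult_left_mono) auto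
    thus ?thesis using step[OF that] by linarith
  qed
  have nz: "poly (map_poly complex_of_real (p n)) z \<noteq> 0" for n
  proof (cases "n \<ge> 1")
    case True
    have "(A n)^2 > 0" using main[OF True] rp
      by (smt (verit) zero_less_mult_iff zero_less_power)
    thus ?thesis by (auto simp: A_def)
  next
    case False hence "n = 0" by simp
    thus ?thesis using A0 by (auto simp: A_def)
  qed
  have lim: "liminf (\<lambda>n. ereal (A n powr (1 / real n))) \<ge> ereal (sqrt (1 + r))"
    by (rule liminf_part[OF rp main]) (simp_all add: A_def)
  have "sqrt (1 + r) > 1" using rp by simp
  thus ?thesis using main nz lim by (simp add: A_def r_def)
qed


end
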